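(* There is a family of classes $(K_f)_{f\in 2^\omega}$ such that $K_f\le_c PF$ for every $f\in 2^\omega$, and $K_f\perp K_g$ for all distinct $f,g\in 2^\omega$.
   Context: Conventions: every structure is for a finite relational language with universe a subset of $\omega$; a class is a collection of structures for one language closed under isomorphism. $D(\mathcal{A})$ is the atomic diagram of $\mathcal{A}$. A computable transformation from $K$ to $K'$ is a c.e. set $\Phi$ of pairs $(\alpha,\varphi)$, $\alpha$ a finite subset of the atomic diagram of a finite structure in the language of $K$, $\varphi$ an atomic sentence or negation of one in the language of $K'$, such that for every $\mathcal{A}\in K$, $\{\varphi:(\exists\alpha\subseteq D(\mathcal{A}))(\alpha,\varphi)\in\Phi\}=D(\mathcal{B})$ for some $\mathcal{B}\in K'$. A computable embedding is a computable transformation with $\mathcal{A}\cong\mathcal{A}'\iff\Phi(\mathcal{A})\cong\Phi(\mathcal{A}')$; $K\le_c K'$ means one exists; $K\perp K'$ means $K\not\le_c K'$ and $K'\not\le_c K$. $PF$ is the class of finite prime fields (in a relational language). *)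

theory Defs
  imports Main "HOL-Library.Nat_Bijection" "HOL-Computational_Algebra.Primes"
begin

datatype recf = Zf | Sf | Proj nat | Comp recf "recf list" | Prec recf recf | Minf recf

inductive reval :: "recf \<Rightarrow> nat list \<Rightarrow> nat \<Rightarrow> bool" where
  zero: "reval Zf xs 0"
| succ: "reval Sf (x # xs) (Suc x)"
| proj: "i < length xs \<Longrightarrow> reval (Proj i) xs (xs ! i)"
| comp: "list_all2 (\<lambda>g y. reval g xs y) gs ys \<Longrightarrow> reval f ys z \<Longrightarrow> reval (Comp f gs) xs z"
| prec0: "reval f xs y \<Longrightarrow> reval (Prec f g) (0 # xs) y"
| precS: "reval (Prec f g) (n # xs) y \<Longrightarrow> reval g (y # n # xs) z
           \<Longrightarrow> reval (Prec f g) (Suc n # xs) z"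
| mini: "reval f (n # xs) 0 \<Longrightarrow> (\<forall>i<n. \<exists>v. reval f (i # xs) (Suc v))
           \<Longrightarrow> reval (Minf f) xs n"

definition ce_set :: "nat set \<Rightarrow> bool" where
  "ce_set A \<longleftrightarrow> (\<exists>f. A = {n. \<exists>y. reval f [n] y})"

text \<open>A finite relational language is a list of arities; relation symbol i has arity sig!i.
  A structure is a pair (universe, interpretation of relation symbols).\<close>
type_synonym struc = "nat set \<times> (nat \<Rightarrow> nat list \<Rightarrow> bool)"

definition is_struc :: "nat list \<Rightarrow> struc \<Rightarrow> bool" where
  "is_struc sig A \<longleftrightarrow> fst A \<noteq> {} \<and>
     (\<forall>i as. snd A i as \<longrightarrow> i < length sig \<and> length as = sig ! i \<and> set as \<subseteq> fst A)"

definition iso :: "struc \<Rightarrow> struc \<Rightarrow> bool" where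
  "iso A B \<longleftrightarrow> (\<exists>h. bij_betw h (fst A) (fst B) \<and>
     (\<forall>i as. set as \<subseteq> fst A \<longrightarrow> (snd A i as \<longleftrightarrow> snd B i (map h as))))"

definition is_class :: "nat list \<Rightarrow> struc set \<Rightarrow> bool" where
  "is_class sig K \<longleftrightarrow> (\<forall>A\<in>K. is_struc sig A) \<and>
     (\<forall>A B. A \<in> K \<longrightarrow> is_struc sig B \<longrightarrow> iso A B \<longrightarrow> B \<in> K)"

datatype atom = AEq nat nat | ARel nat "nat list"
datatype lit = Pos atom | Neg atom

fun atom_in :: "nat list \<Rightarrow> atom \<Rightarrow> bool" where
  "atom_in sig (AEq a b) = True"
| "atom_in sig (ARel i as) = (i < length sig \<and> length as = sig ! i)"

fun lit_in :: "nat list \<Rightarrow> lit \<Rightarrow> bool" where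
  "lit_in sig (Pos a) = atom_in sig a"
| "lit_in sig (Neg a) = atom_in sig a"

definition diag :: "nat list \<Rightarrow> struc \<Rightarrow> lit set" where
  "diag sig A =
     {Pos (AEq a b) | a b. a \<in> fst A \<and> b \<in> fst A \<and> a = b} \<union>
     {Neg (AEq a b) | a b. a \<in> fst A \<and> b \<in> fst A \<and> a \<noteq> b} \<union>
     {Pos (ARel i as) | i as. i < length sig \<and> length as = sig ! i \<and> set as \<subseteq> fst A
                                \<and> snd A i as} \<union>
     {Neg (ARel i as) | i as. i < length sig \<and> length as = sig ! i \<and> set as \<subseteq> fst A
                                \<and> \<not> snd A i as}"

fun atom_code :: "atom \<Rightarrow> nat" where
  "atom_code (AEq a b) = prod_encode (0, prod_encode (a, b))"
| "atom_code (ARel i as) = prod_encode (1, prod_encode (i, list_encode as))"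

fun lit_code :: "lit \<Rightarrow> nat" where
  "lit_code (Pos a) = prod_encode (0, atom_code a)"
| "lit_code (Neg a) = prod_encode (1, atom_code a)"

definition pair_code :: "lit set \<times> lit \<Rightarrow> nat" where
  "pair_code p = prod_encode (set_encode (lit_code ` fst p), lit_code (snd p))"

definition transf_out :: "nat list \<Rightarrow> (lit set \<times> lit) set \<Rightarrow> struc \<Rightarrow> lit set" where
  "transf_out sig \<Phi> A = {\<phi>. \<exists>\<alpha>. \<alpha> \<subseteq> diag sig A \<and> (\<alpha>, \<phi>) \<in> \<Phi>}"

definition comp_transf ::
  "nat list \<Rightarrow> struc set \<Rightarrow> nat list \<Rightarrow> struc set \<Rightarrow> (lit set \<times> lit) set \<Rightarrow> bool" where
  "comp_transf sig K sig' K' \<Phi> \<longleftrightarrow>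
     (\<forall>(\<alpha>, \<phi>) \<in> \<Phi>. finite \<alpha> \<and>
         (\<exists>C. is_struc sig C \<and> finite (fst C) \<and> \<alpha> \<subseteq> diag sig C) \<and> lit_in sig' \<phi>) \<and>
     ce_set (pair_code ` \<Phi>) \<and>
     (\<forall>A\<in>K. \<exists>B\<in>K'. transf_out sig \<Phi> A = diag sig' B)"

definition comp_emb ::
  "nat list \<Rightarrow> struc set \<Rightarrow> nat list \<Rightarrow> struc set \<Rightarrow> (lit set \<times> lit) set \<Rightarrow> bool" where
  "comp_emb sig K sig' K' \<Phi> \<longleftrightarrow> comp_transf sig K sig' K' \<Phi> \<and>
     (\<forall>A A' B B'. A \<in> K \<longrightarrow> A' \<in> K \<longrightarrow> B \<in> K' \<longrightarrow> B' \<in> K' \<longrightarrow>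
        transf_out sig \<Phi> A = diag sig' B \<longrightarrow> transf_out sig \<Phi> A' = diag sig' B' \<longrightarrow>
        (iso A A' \<longleftrightarrow> iso B B'))"

definition le_c :: "nat list \<Rightarrow> struc set \<Rightarrow> nat list \<Rightarrow> struc set \<Rightarrow> bool" where
  "le_c sig K sig' K' \<longleftrightarrow> (\<exists>\<Phi>. comp_emb sig K sig' K' \<Phi>)"

definition incomparable :: "nat list \<Rightarrow> struc set \<Rightarrow> nat list \<Rightarrow> struc set \<Rightarrow> bool" where
  "incomparable sig K sig' K' \<longleftrightarrow> \<not> le_c sig K sig' K' \<and> \<not> le_c sig' K' sig K"

text \<open>Relational language: relation 0 is the graph of addition, relation 1 the graph
  of multiplication (both ternary).\<close>
definition PF_sig :: "nat list" where "PF_sig = [3, 3]"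

definition Zp_struc :: "nat \<Rightarrow> struc" where
  "Zp_struc p = ({0..<p}, \<lambda>i as. length as = 3 \<and> set as \<subseteq> {0..<p} \<and>
      ((i = 0 \<and> (as!0 + as!1) mod p = as!2) \<or> (i = 1 \<and> (as!0 * as!1) mod p = as!2)))"

definition PF :: "struc set" where
  "PF = {A. is_struc PF_sig A \<and> (\<exists>p::nat. prime p \<and> iso (Zp_struc p) A)}"

end

theory Submission
  imports Defs "HOL-Library.Countable"
begin


instance recf :: countable by countable_datatype

inductive_cases Zf_E: "reval Zf xs y"
inductive_cases Sf_E: "reval Sf xs y"
inductive_cases Proj_E: "reval (Proj i) xs y"
inductive_cases Comp_E: "reval (Comp f gs) xs y"
inductive_cases Prec_E: "reval (Prec f g) xs y"
inductive_cases Minf_E: "reval (Minf f) xs y"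

lemma list_all2_det:
  "list_all2 (\<lambda>g y. reval g xs y \<and> (\<forall>y'. reval g xs y' \<longrightarrow> y = y')) gs ys
   \<Longrightarrow> list_all2 (\<lambda>g y. reval g xs y) gs ys' \<Longrightarrow> ys = ys'"
proof (induction gs arbitrary: ys ys')
  case Nil then show ?case by simp
next
  case (Cons g gs)
  from Cons.prems(1) obtain y ys0 where A: "ys = y # ys0" "\<forall>y'. reval g xs y' \<longrightarrow> y = y'"
     "list_all2 (\<lambda>g y. reval g xs y \<and> (\<forall>y'. reval g xs y' \<longrightarrow> y = y')) gs ys0"
    unfolding list_all2_Cons1 by blast
  from Cons.prems(2) obtain y' ys0' where B: "ys' = y' # ys0'" "reval g xs y'"
     "list_all2 (\<lambda>g y. reval g xs y) gs ys0'"
    unfolding list_all2_Cons1 by blast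
  from A(2) B(2) have "y = y'" by blast
  moreover from Cons.IH[OF A(3) B(3)] have "ys0 = ys0'" .
  ultimately show ?case using A(1) B(1) by simp
qed

lemma reval_det: "reval f xs y \<Longrightarrow> reval f xs y' \<Longrightarrow> y = y'"
proof (induction arbitrary: y' rule: reval.induct)
  case (zero xs) from zero.prems show ?case by (rule Zf_E) simp
next
  case (succ x xs) from succ.prems show ?case by (rule Sf_E) simp
next
  case (proj i xs) from proj.prems show ?case by (rule Proj_E) simp
next
  case (comp xs gs ys f z)
  from comp.prems obtain ys' where a: "list_all2 (\<lambda>g y. reval g xs y) gs ys'" "reval f ys' y'"
    by (rule Comp_E) simp
  have "list_all2 (\<lambda>g y. reval g xs y \<and> (\<forall>y'. reval g xs y' \<longrightarrow> y = y')) gs ys"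
    using comp.IH(1) by (rule list_all2_mono) simp
  then have "ys = ys'" using a(1) by (rule list_all2_det)
  with a(2) comp.IH(2) show ?case by blast
next
  case (prec0 f xs y g)
  from prec0.prems show ?case
  proof (rule Prec_E)
    fix f' xs' assume "0 # xs = 0 # xs'" "reval f xs' y'"
    with prec0.IH show ?thesis by blast
  qed simp_all
next
  case (precS f g n xs y z)
  from precS.prems obtain y2 where "reval (Prec f g) (n # xs) y2" "reval g (y2 # n # xs) y'"
    by (rule Prec_E) blast+
  moreover from this(1) precS.IH(1) have "y = y2" by blast
  ultimately show ?case using precS.IH(2) by blast
next
  case (mini f n xs)
  from mini.prems obtain
    h1: "reval f (y' # xs) 0" and h2: "\<forall>i<y'. \<exists>v. reval f (i # xs) (Suc v)"
    by (rule Minf_E) simp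
  show ?case
  proof (rule ccontr)
    assume ne: "n \<noteq> y'"
    show False
    proof (cases "n < y'")
      case True
      with h2 obtain v where v: "reval f (n # xs) (Suc v)" by blast
      from mini.IH(1)[rule_format, OF v] show False by simp
    next
      case False
      with ne have "y' < n" by simp
      with mini.IH(2) obtain v where "\<forall>y''. reval f (y' # xs) y'' \<longrightarrow> Suc v = y''" by blast
      from this[rule_format, OF h1] show False by simp
    qed
  qed
qed

lemma proj': "i < length xs \<Longrightarrow> y = xs ! i \<Longrightarrow> reval (Proj i) xs y"
  using reval.proj by simp

lemma precS': "reval (Prec f g) (n # xs) y \<Longrightarrow> reval g (y # n # xs) z \<Longrightarrow> m = Suc n
  \<Longrightarrow> reval (Prec f g) (m # xs) z"
  using reval.precS by simp

definition c1 :: recf where "c1 = Comp Sf [Zf]"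

lemma c1_val: "reval c1 xs 1"
  unfolding c1_def by (rule reval.comp[of _ _ "[0]"]) (auto intro: reval.intros)

fun eqc :: "nat \<Rightarrow> recf" where
  "eqc 0 = Prec Zf c1"
| "eqc (Suc c) = Prec c1 (Comp (eqc c) [Proj 1])"

lemma eqc_val: "reval (eqc c) [x] (if x = c then 0 else 1)"
proof (induction c arbitrary: x)
  case 0 then show ?case
  proof (cases x)
    case 0 then show ?thesis by (auto intro: reval.intros)
  next
    case (Suc n)
    have "\<exists>y. reval (Prec Zf c1) [m] y" for m
    proof (induction m)
      case 0 then show ?case by (auto intro: reval.intros)
    next
      case (Suc m) then obtain y where "reval (Prec Zf c1) [m] y" by blast
      from precS'[OF this c1_val] show ?case by blast
    qed
    then obtain y where "reval (Prec Zf c1) [n] y" by blast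
    from precS'[OF this c1_val] Suc show ?thesis by simp
  qed
next
  case (Suc c)
  have g: "reval (Comp (eqc c) [Proj 1]) [y, n] (if n = c then 0 else 1)" for y n
    by (rule reval.comp[of _ _ "[n]"]) (use Suc.IH[of n] in \<open>auto intro: proj'\<close>)
  have ex: "\<exists>y. reval (Prec c1 (Comp (eqc c) [Proj 1])) [n] y" for n
  proof (induction n)
    case 0 then show ?case by (auto intro: reval.prec0 c1_val)
  next
    case (Suc n)
    then obtain y where y: "reval (Prec c1 (Comp (eqc c) [Proj 1])) [n] y" by blast
    from precS'[OF y g] show ?case by blast
  qed
  show ?case
  proof (cases x)
    case 0 then show ?thesis using reval.prec0[OF c1_val[of "[]"], of "Comp (eqc c) [Proj 1]"] by simp
  next
    case (Suc n)
    from ex obtain y where b: "reval (Prec c1 (Comp (eqc c) [Proj 1])) [n] y" by blast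
    from precS'[OF b g] Suc show ?thesis by simp
  qed
qed

definition andf :: recf where "andf = Prec Zf (Proj 2)"

lemma andf_val0: "reval andf [b, a] (if b = 0 then 0 else a)"
proof (cases b)
  case 0 then show ?thesis unfolding andf_def by (auto intro: reval.intros)
next
  case (Suc n)
  have "\<exists>y. reval (Prec Zf (Proj 2)) [m, a] y" for m
  proof (induction m)
    case 0 then show ?case by (auto intro: reval.intros)
  next
    case (Suc m) then obtain y where "reval (Prec Zf (Proj 2)) [m, a] y" by blast
    from precS'[OF this proj'[of 2 "[y, m, a]" a]] show ?case by auto
  qed
  then obtain y where "reval (Prec Zf (Proj 2)) [n, a] y" by blast
  from precS'[OF this proj'[of 2 "[y, n, a]" a]] Suc show ?thesis unfolding andf_def by simp
qed

lemma andf_val: "z = (if b = 0 then 0 else a) \<Longrightarrow> reval andf [b, a] z"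
  using andf_val0 by simp

lemma char_exists: "finite S \<Longrightarrow> \<exists>r. \<forall>x. reval r [x] (if x \<in> S then 0 else 1)"
proof (induction rule: finite_induct)
  case empty then show ?case using c1_val by auto
next
  case (insert c S)
  then obtain r where r: "\<forall>x. reval r [x] (if x \<in> S then 0 else 1)" by auto
  have "reval (Comp andf [eqc c, r]) [x] (if x \<in> insert c S then 0 else 1)" for x
    by (rule reval.comp[of _ _ "[if x = c then 0 else 1, if x \<in> S then 0 else 1]"])
       (use r eqc_val in \<open>auto intro: andf_val\<close>)
  then show ?case by blast
qed

lemma ce_finite: assumes "finite S" shows "ce_set S"
proof -
  obtain r where r: "\<forall>x. reval r [x] (if x \<in> S then 0 else 1)" using char_exists[OF assms] by auto
  let ?F = "Minf (Comp r [Proj 1])"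
  have cv: "reval (Comp r [Proj 1]) [m, x] (if x \<in> S then 0 else 1)" for m x
    by (rule reval.comp[of _ _ "[x]"]) (use r in \<open>auto intro: proj'\<close>)
  have "x \<in> S \<longleftrightarrow> (\<exists>y. reval ?F [x] y)" for x
  proof
    assume "x \<in> S" then show "\<exists>y. reval ?F [x] y"
      using cv[of 0 x] by (auto intro!: reval.mini)
  next
    assume "\<exists>y. reval ?F [x] y"
    then obtain y where "reval (Comp r [Proj 1]) [y, x] 0" by (auto elim: Minf_E)
    from reval_det[OF this cv[of y x]] show "x \<in> S" by (simp split: if_splits)
  qed
  then have "S = {n. \<exists>y. reval ?F [n] y}" by blast
  then show ?thesis unfolding ce_set_def by (rule exI)
qed



lemma iso_refl: "iso A A"
  unfolding iso_def by (rule exI[of _ id]) auto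

lemma iso_sym: assumes "iso A B" shows "iso B A"
proof -
  from assms obtain h where h: "bij_betw h (fst A) (fst B)"
    "\<forall>i as. set as \<subseteq> fst A \<longrightarrow> (snd A i as \<longleftrightarrow> snd B i (map h as))"
    unfolding iso_def by blast
  let ?g = "inv_into (fst A) h"
  have g: "bij_betw ?g (fst B) (fst A)" using h(1) by (rule bij_betw_inv_into)
  have "snd B i as \<longleftrightarrow> snd A i (map ?g as)" if "set as \<subseteq> fst B" for i as
  proof -
    have s: "set (map ?g as) \<subseteq> fst A" using g that by (auto simp: bij_betw_def)
    have "map h (map ?g as) = map (h \<circ> ?g) as" by simp
    also have "\<dots> = as"
    proof (rule map_idI)
      fix x assume "x \<in> set as"
      with that have "x \<in> h ` fst A" using h(1) by (auto simp: bij_betw_def)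
      then show "(h \<circ> ?g) x = x" by (simp add: f_inv_into_f)
    qed
    finally have "map h (map ?g as) = as" .
    with h(2) s show ?thesis by metis
  qed
  with g show ?thesis unfolding iso_def by blast
qed

lemma iso_trans: assumes "iso A B" "iso B C" shows "iso A C"
proof -
  from assms(1) obtain h where h: "bij_betw h (fst A) (fst B)"
    "\<forall>i as. set as \<subseteq> fst A \<longrightarrow> (snd A i as \<longleftrightarrow> snd B i (map h as))"
    unfolding iso_def by blast
  from assms(2) obtain k where k: "bij_betw k (fst B) (fst C)"
    "\<forall>i as. set as \<subseteq> fst B \<longrightarrow> (snd B i as \<longleftrightarrow> snd C i (map k as))"
    unfolding iso_def by blast
  have "bij_betw (k \<circ> h) (fst A) (fst C)" using h(1) k(1) by (rule bij_betw_trans)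
  moreover have "snd A i as \<longleftrightarrow> snd C i (map (k \<circ> h) as)" if "set as \<subseteq> fst A" for i as
  proof -
    have "set (map h as) \<subseteq> fst B" using that h(1) by (auto simp: bij_betw_def)
    with h(2) k(2) that show ?thesis by simp
  qed
  ultimately show ?thesis unfolding iso_def by blast
qed

lemma diag_lit_in: "\<phi> \<in> diag sig A \<Longrightarrow> lit_in sig \<phi>"
  unfolding diag_def by auto

lemma diag_inj:
  assumes "is_struc sig A" "is_struc sig B" "diag sig A = diag sig B"
  shows "A = B"
proof -
  have u: "fst A = fst B"
  proof -
    have "a \<in> fst A \<longleftrightarrow> Pos (AEq a a) \<in> diag sig A" for a by (auto simp: diag_def)
    moreover have "a \<in> fst B \<longleftrightarrow> Pos (AEq a a) \<in> diag sig B" for a by (auto simp: diag_def)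
    ultimately show ?thesis using assms(3) by blast
  qed
  have "snd A i as \<longleftrightarrow> snd B i as" for i as
  proof -
    have "snd A i as \<longleftrightarrow> (i < length sig \<and> length as = sig ! i \<and> set as \<subseteq> fst A \<and>
         Pos (ARel i as) \<in> diag sig A)" using assms(1) by (auto simp: diag_def is_struc_def)
    moreover have "snd B i as \<longleftrightarrow> (i < length sig \<and> length as = sig ! i \<and> set as \<subseteq> fst B \<and>
         Pos (ARel i as) \<in> diag sig B)" using assms(2) by (auto simp: diag_def is_struc_def)
    ultimately show ?thesis using u assms(3) by simp
  qed
  then have "snd A = snd B" by (intro ext)
  with u show ?thesis by (simp add: prod_eq_iff)
qed

lemma finite_diag: assumes "finite (fst A)" shows "finite (diag sig A)"
proof -
  let ?U = "fst A"
  let ?L = "{as. set as \<subseteq> ?U \<and> length as \<le> sum_list sig}"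
  have fL: "finite ?L" using assms by (rule finite_lists_length_le)
  have "diag sig A \<subseteq> (\<lambda>(a,b). Pos (AEq a b)) ` (?U \<times> ?U) \<union> (\<lambda>(a,b). Neg (AEq a b)) ` (?U \<times> ?U)
      \<union> (\<lambda>(i,as). Pos (ARel i as)) ` ({..<length sig} \<times> ?L)
      \<union> (\<lambda>(i,as). Neg (ARel i as)) ` ({..<length sig} \<times> ?L)"
    unfolding diag_def by (auto intro!: imageI elem_le_sum_list)
  moreover have "finite ((\<lambda>(a,b). Pos (AEq a b)) ` (?U \<times> ?U) \<union> (\<lambda>(a,b). Neg (AEq a b)) ` (?U \<times> ?U)
      \<union> (\<lambda>(i,as). Pos (ARel i as)) ` ({..<length sig} \<times> ?L)
      \<union> (\<lambda>(i,as). Neg (ARel i as)) ` ({..<length sig} \<times> ?L))"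
    using assms fL by auto
  ultimately show ?thesis by (rule finite_subset)
qed

definition sigB :: "nat list" where "sigB = [1, 2, 1]"

definition Bs :: "(nat \<Rightarrow> bool) \<Rightarrow> struc" where
  "Bs Y = (UNIV, \<lambda>i as. (i = 0 \<and> as = [0]) \<or> (i = 1 \<and> (\<exists>n. as = [n, Suc n]))
                       \<or> (i = 2 \<and> (\<exists>n. as = [n] \<and> Y n)))"

definition KK :: "(nat \<Rightarrow> bool) \<Rightarrow> struc set" where
  "KK Y = {A. is_struc sigB A \<and> iso (Bs Y) A}"

lemma Bs_struc: "is_struc sigB (Bs Y)"
  unfolding is_struc_def Bs_def sigB_def by auto

lemma Bs_in: "Bs Y \<in> KK Y"
  unfolding KK_def using Bs_struc iso_refl by blast

lemma KK_class: "is_class sigB (KK Y)"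
  unfolding is_class_def KK_def using iso_trans by blast

definition Phi0 :: "(lit set \<times> lit) set" where
  "Phi0 = (\<lambda>\<phi>. ({}, \<phi>)) ` diag PF_sig (Zp_struc 2)"

lemma Zp2_struc: "is_struc PF_sig (Zp_struc 2)"
  unfolding is_struc_def Zp_struc_def PF_sig_def by auto

lemma Zp2_PF: "Zp_struc 2 \<in> PF"
  unfolding PF_def using Zp2_struc iso_refl[of "Zp_struc 2"] two_is_prime_nat by blast

lemma out_Phi0: "transf_out sig Phi0 A = diag PF_sig (Zp_struc 2)"
  unfolding transf_out_def Phi0_def by auto

lemma KK_le_PF: "le_c sigB (KK Y) PF_sig PF"
proof -
  have fin: "finite (diag PF_sig (Zp_struc 2))"
    by (rule finite_diag) (simp add: Zp_struc_def)
  have ct: "comp_transf sigB (KK Y) PF_sig PF Phi0"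
    unfolding comp_transf_def
  proof (intro conjI)
    show "\<forall>(\<alpha>, \<phi>)\<in>Phi0. finite \<alpha> \<and>
         (\<exists>C. is_struc sigB C \<and> finite (fst C) \<and> \<alpha> \<subseteq> diag sigB C) \<and> lit_in PF_sig \<phi>"
    proof (clarify)
      fix \<alpha> \<phi> assume "(\<alpha>, \<phi>) \<in> Phi0"
      then have "\<alpha> = {}" "\<phi> \<in> diag PF_sig (Zp_struc 2)" unfolding Phi0_def by auto
      moreover have "is_struc sigB ({0}, \<lambda>_ _. False)" unfolding is_struc_def by auto
      ultimately show "finite \<alpha> \<and>
         (\<exists>C. is_struc sigB C \<and> finite (fst C) \<and> \<alpha> \<subseteq> diag sigB C) \<and> lit_in PF_sig \<phi>"
        using diag_lit_in by fastforce
    qed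
    show "ce_set (pair_code ` Phi0)" using fin unfolding Phi0_def by (intro ce_finite) auto
    show "\<forall>A\<in>KK Y. \<exists>B\<in>PF. transf_out sigB Phi0 A = diag PF_sig B"
      using out_Phi0 Zp2_PF by blast
  qed
  have "comp_emb sigB (KK Y) PF_sig PF Phi0"
    unfolding comp_emb_def
  proof (intro conjI ct allI impI)
    fix A A' B B'
    assume h: "A \<in> KK Y" "A' \<in> KK Y" "B \<in> PF" "B' \<in> PF"
      "transf_out sigB Phi0 A = diag PF_sig B" "transf_out sigB Phi0 A' = diag PF_sig B'"
    have "iso A A'" using h(1,2) unfolding KK_def using iso_sym iso_trans by blast
    moreover have "B = B'"
      using h(3-6) out_Phi0 by (intro diag_inj[of PF_sig]) (auto simp: PF_def)
    ultimately show "iso A A' = iso B B'" using iso_refl by simp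
  qed
  then show ?thesis unfolding le_c_def by blast
qed



lemma atom_code_inj: "atom_code a = atom_code b \<Longrightarrow> a = b"
  by (cases a; cases b) (auto simp: prod_encode_eq list_encode_eq)

lemma lit_code_inj: "inj lit_code"
proof (rule injI)
  fix x y assume "lit_code x = lit_code y"
  then show "x = y" by (cases x; cases y) (auto simp: prod_encode_eq dest: atom_code_inj)
qed

lemma pair_code_inj:
  assumes "finite (fst p)" "finite (fst q)" "pair_code p = pair_code q" shows "p = q"
proof -
  from assms(3) have e: "set_encode (lit_code ` fst p) = set_encode (lit_code ` fst q)"
    "lit_code (snd p) = lit_code (snd q)" unfolding pair_code_def by (simp_all add: prod_encode_eq)
  have "lit_code ` fst p = lit_code ` fst q"
    using e(1) set_encode_eq[of "lit_code ` fst p" "lit_code ` fst q"] assms(1,2) by simp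
  then have "fst p = fst q" by (metis inj_image_eq_iff lit_code_inj)
  have "snd p = snd q" using lit_code_inj e(2) by (rule injD)
  with \<open>fst p = fst q\<close> show ?thesis by (simp add: prod_eq_iff)
qed

definition PhiR :: "recf \<Rightarrow> (lit set \<times> lit) set" where
  "PhiR r = {p. finite (fst p) \<and> (\<exists>y. reval r [pair_code p] y)}"

lemma Phi_is_PhiR:
  assumes "comp_transf sig K sig' K' \<Phi>" shows "\<exists>r. \<Phi> = PhiR r"
proof -
  from assms have fin: "\<forall>p\<in>\<Phi>. finite (fst p)" and ce: "ce_set (pair_code ` \<Phi>)"
    unfolding comp_transf_def by auto
  from ce obtain r where r: "pair_code ` \<Phi> = {n. \<exists>y. reval r [n] y}" unfolding ce_set_def by blast
  have "\<Phi> = PhiR r"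
  proof
    show "\<Phi> \<subseteq> PhiR r"
    proof
      fix p assume p: "p \<in> \<Phi>"
      then have "pair_code p \<in> {n. \<exists>y. reval r [n] y}" using r by (metis imageI)
      with fin p show "p \<in> PhiR r" unfolding PhiR_def by simp
    qed
  next
    show "PhiR r \<subseteq> \<Phi>"
    proof
      fix p assume "p \<in> PhiR r"
      then have "finite (fst p)" "pair_code p \<in> pair_code ` \<Phi>" unfolding PhiR_def using r by auto
      then obtain q where "q \<in> \<Phi>" "pair_code p = pair_code q" by auto
      with fin \<open>finite (fst p)\<close> have "p = q" using pair_code_inj by blast
      with \<open>q \<in> \<Phi>\<close> show "p \<in> \<Phi>" by simp
    qed
  qed
  then show ?thesis by blast
qed

definition outF :: "(lit set \<times> lit) set \<Rightarrow> struc \<Rightarrow> lit set" where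
  "outF \<Phi> A = {\<phi>. \<exists>\<alpha>. finite \<alpha> \<and> \<alpha> \<subseteq> diag sigB A \<and> (\<alpha>, \<phi>) \<in> \<Phi>}"

lemma out_eq: assumes "\<forall>p\<in>\<Phi>. finite (fst p)" shows "transf_out sigB \<Phi> A = outF \<Phi> A"
proof -
  have "(\<alpha>, \<phi>) \<in> \<Phi> \<Longrightarrow> finite \<alpha>" for \<alpha> \<phi> using assms by force
  then show ?thesis unfolding transf_out_def outF_def by blast
qed

definition declits :: "nat \<Rightarrow> bool \<Rightarrow> nat list \<Rightarrow> lit set" where
  "declits n b xs = insert (Pos (ARel 0 [xs!0]))
      (insert ((if b then Pos else Neg) (ARel 2 [xs!n]))
        ((\<lambda>i. Pos (ARel 1 [xs!i, xs!Suc i])) ` {..<n}))"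

definition Dec :: "lit set \<Rightarrow> (nat \<times> bool) set" where
  "Dec S = {(n, b). \<exists>xs. length xs = Suc n \<and> declits n b xs \<subseteq> S}"

definition graph :: "(nat \<Rightarrow> bool) \<Rightarrow> (nat \<times> bool) set" where
  "graph Y = range (\<lambda>n. (n, Y n))"

lemma diag_pos: "Pos (ARel i as) \<in> diag sig A \<longleftrightarrow>
   i < length sig \<and> length as = sig ! i \<and> set as \<subseteq> fst A \<and> snd A i as"
  unfolding diag_def by auto

lemma diag_neg: "Neg (ARel i as) \<in> diag sig A \<longleftrightarrow>
   i < length sig \<and> length as = sig ! i \<and> set as \<subseteq> fst A \<and> \<not> snd A i as"
  unfolding diag_def by auto

lemma Dec_graph:
  assumes "iso (Bs Y) A" shows "Dec (diag sigB A) = graph Y"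
proof -
  from assms obtain h where h: "bij_betw h UNIV (fst A)"
    "\<And>i as. snd (Bs Y) i as \<longleftrightarrow> snd A i (map h as)"
    unfolding iso_def Bs_def by auto
  have hs: "fst A = range h" using h(1) by (auto simp: bij_betw_def)
  have R0: "snd A 0 [h m] \<longleftrightarrow> m = 0" for m using h(2)[of 0 "[m]"] by (simp add: Bs_def)
  have R1: "snd A 1 [h m, h m'] \<longleftrightarrow> m' = Suc m" for m m' using h(2)[of 1 "[m, m']"] by (simp add: Bs_def)
  have R2: "snd A 2 [h m] \<longleftrightarrow> Y m" for m using h(2)[of 2 "[m]"] by (simp add: Bs_def)
  show ?thesis
  proof
    show "Dec (diag sigB A) \<subseteq> graph Y"
    proof clarify
      fix n b assume "(n, b) \<in> Dec (diag sigB A)"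
      then obtain xs where xs: "length xs = Suc n" "declits n b xs \<subseteq> diag sigB A"
        unfolding Dec_def by auto
      have elems: "xs ! i \<in> range h" if "i \<le> n" for i
      proof -
        have "Pos (ARel 0 [xs!0]) \<in> diag sigB A" using xs(2) unfolding declits_def by auto
        have "i = 0 \<or> (\<exists>j. i = Suc j \<and> j < n)" using that by (cases i) auto
        then show ?thesis
        proof
          assume "i = 0" then show ?thesis
            using \<open>Pos (ARel 0 [xs!0]) \<in> diag sigB A\<close> hs by (auto simp: diag_pos)
        next
          assume "\<exists>j. i = Suc j \<and> j < n"
          then obtain j where "i = Suc j" "j < n" by auto
          then have "Pos (ARel 1 [xs!j, xs!Suc j]) \<in> diag sigB A" using xs(2) unfolding declits_def by auto
          then show ?thesis using hs \<open>i = Suc j\<close> by (auto simp: diag_pos)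
        qed
      qed
      have xi: "xs ! i = h i" if "i \<le> n" for i
        using that
      proof (induction i)
        case 0
        from elems[of 0] obtain m where m: "xs ! 0 = h m" by auto
        have "Pos (ARel 0 [xs!0]) \<in> diag sigB A" using xs(2) unfolding declits_def by auto
        then have "snd A 0 [h m]" using m by (simp add: diag_pos)
        with R0 m show ?case by simp
      next
        case (Suc i)
        from elems[OF Suc.prems] obtain m where m: "xs ! Suc i = h m" by auto
        have "Pos (ARel 1 [xs!i, xs!Suc i]) \<in> diag sigB A" using xs(2) Suc.prems unfolding declits_def by auto
        then have "snd A 1 [h i, h m]" using m Suc by (simp add: diag_pos)
        with R1 m show ?case by simp
      qed
      have "(if b then Pos else Neg) (ARel 2 [xs!n]) \<in> diag sigB A" using xs(2) unfolding declits_def by auto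
      then have "b = Y n" using xi[of n] R2[of n] by (cases b) (auto simp: diag_pos diag_neg)
      then show "(n, b) \<in> graph Y" unfolding graph_def by auto
    qed
  next
    show "graph Y \<subseteq> Dec (diag sigB A)" unfolding graph_def
    proof (rule subsetI, elim rangeE)
      fix x n assume "x = (n, Y n)"
      let ?xs = "map h [0..<Suc n]"
      have nth: "?xs ! i = h i" if "i \<le> n" for i using that by (simp del: upt_Suc)
      have a0: "Pos (ARel 0 [?xs!0]) \<in> diag sigB A"
        using nth[of 0] R0[of 0] hs by (simp add: diag_pos sigB_def del: upt_Suc)
      have a2: "(if Y n then Pos else Neg) (ARel 2 [?xs!n]) \<in> diag sigB A"
        using nth[of n] R2[of n] hs by (cases "Y n") (simp_all add: diag_pos diag_neg sigB_def del: upt_Suc)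
      have a1: "Pos (ARel 1 [?xs!i, ?xs!Suc i]) \<in> diag sigB A" if "i < n" for i
        using that nth[of i] nth[of "Suc i"] R1[of i "Suc i"] hs by (simp add: diag_pos sigB_def del: upt_Suc)
      have "declits n (Y n) ?xs \<subseteq> diag sigB A"
        unfolding declits_def using a0 a1 a2 by blast
      then show "x \<in> Dec (diag sigB A)" using \<open>x = (n, Y n)\<close> unfolding Dec_def by (auto intro!: exI[of _ ?xs] simp del: upt_Suc)
    qed
  qed
qed

definition agree :: "nat \<Rightarrow> (nat \<Rightarrow> bool) \<Rightarrow> (nat \<Rightarrow> bool) \<Rightarrow> bool" where
  "agree k X X' \<longleftrightarrow> (\<forall>j<k. X' j = X j)"

lemma agree_mono: "agree k X X' \<Longrightarrow> k' \<le> k \<Longrightarrow> agree k' X X'"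
  unfolding agree_def by auto

lemma fin_cont:
  assumes "finite L" "\<forall>l\<in>L. \<exists>k. \<forall>X'. agree k X X' \<longrightarrow> P l X'"
  shows "\<exists>k. \<forall>X'. agree k X X' \<longrightarrow> (\<forall>l\<in>L. P l X')"
  using assms
proof (induction rule: finite_induct)
  case empty then show ?case by simp
next
  case (insert l L)
  then obtain k1 where k1: "\<forall>X'. agree k1 X X' \<longrightarrow> (\<forall>l\<in>L. P l X')" by auto
  from insert.prems obtain k2 where k2: "\<forall>X'. agree k2 X X' \<longrightarrow> P l X'" by auto
  have "\<forall>X'. agree (max k1 k2) X X' \<longrightarrow> (\<forall>l\<in>insert l L. P l X')"
    using k1 k2 agree_mono by (metis insert_iff max.cobounded1 max.cobounded2)
  then show ?case by blast
qed

lemma Bs_local: "(\<forall>m\<in>set as. X' m = X m) \<Longrightarrow> snd (Bs X') i as = snd (Bs X) i as"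
  unfolding Bs_def by auto

lemma lit_cont: "l \<in> diag sigB (Bs X) \<Longrightarrow> \<exists>k. \<forall>X'. agree k X X' \<longrightarrow> l \<in> diag sigB (Bs X')"
proof -
  assume l: "l \<in> diag sigB (Bs X)"
  have fstB: "fst (Bs Z) = UNIV" for Z by (simp add: Bs_def)
  show ?thesis
  proof (cases l)
    case (Pos a)
    show ?thesis
    proof (cases a)
      case (AEq x y) with l Pos show ?thesis by (auto simp: diag_def fstB)
    next
      case (ARel i as)
      have "\<forall>X'. agree (Suc (sum_list as)) X X' \<longrightarrow> l \<in> diag sigB (Bs X')"
      proof clarify
        fix X' assume "agree (Suc (sum_list as)) X X'"
        then have "\<forall>m\<in>set as. X' m = X m" unfolding agree_def
          by (simp add: le_imp_less_Suc member_le_sum_list)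
        then show "l \<in> diag sigB (Bs X')" using l Pos ARel Bs_local[of as X' X i]
          by (simp add: diag_pos fstB)
      qed
      then show ?thesis by blast
    qed
  next
    case (Neg a)
    show ?thesis
    proof (cases a)
      case (AEq x y) with l Neg show ?thesis by (auto simp: diag_def fstB)
    next
      case (ARel i as)
      have "\<forall>X'. agree (Suc (sum_list as)) X X' \<longrightarrow> l \<in> diag sigB (Bs X')"
      proof clarify
        fix X' assume "agree (Suc (sum_list as)) X X'"
        then have "\<forall>m\<in>set as. X' m = X m" unfolding agree_def
          by (simp add: le_imp_less_Suc member_le_sum_list)
        then show "l \<in> diag sigB (Bs X')" using l Neg ARel Bs_local[of as X' X i]
          by (simp add: diag_neg fstB)
      qed
      then show ?thesis by blast
    qed
  qed
qed

lemma out_cont: "l \<in> outF \<Phi> (Bs X) \<Longrightarrow> \<exists>k. \<forall>X'. agree k X X' \<longrightarrow> l \<in> outF \<Phi> (Bs X')"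
proof -
  assume "l \<in> outF \<Phi> (Bs X)"
  then obtain \<alpha> where a: "finite \<alpha>" "\<alpha> \<subseteq> diag sigB (Bs X)" "(\<alpha>, l) \<in> \<Phi>" unfolding outF_def by auto
  have "\<exists>k. \<forall>X'. agree k X X' \<longrightarrow> (\<forall>l'\<in>\<alpha>. l' \<in> diag sigB (Bs X'))"
    using a(1) by (rule fin_cont) (use a(2) lit_cont in blast)
  then obtain k where "\<forall>X'. agree k X X' \<longrightarrow> \<alpha> \<subseteq> diag sigB (Bs X')" by blast
  then have "\<forall>X'. agree k X X' \<longrightarrow> l \<in> outF \<Phi> (Bs X')" using a unfolding outF_def by blast
  then show ?thesis by blast
qed

definition Vop :: "recf \<Rightarrow> (nat \<Rightarrow> bool) \<Rightarrow> (nat \<times> bool) set" where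
  "Vop r X = Dec (outF (PhiR r) (Bs X))"

definition cont :: "((nat \<Rightarrow> bool) \<Rightarrow> (nat \<times> bool) set) \<Rightarrow> bool" where
  "cont V \<longleftrightarrow> (\<forall>X p. p \<in> V X \<longrightarrow> (\<exists>k. \<forall>X'. agree k X X' \<longrightarrow> p \<in> V X'))"

lemma Vop_cont: "cont (Vop r)"
  unfolding cont_def
proof (intro allI impI)
  fix X p assume "p \<in> Vop r X"
  then obtain n b xs where p: "p = (n, b)" "length xs = Suc n" "declits n b xs \<subseteq> outF (PhiR r) (Bs X)"
    unfolding Vop_def Dec_def by auto
  have "finite (declits n b xs)" unfolding declits_def by simp
  then have "\<exists>k. \<forall>X'. agree k X X' \<longrightarrow> (\<forall>l\<in>declits n b xs. l \<in> outF (PhiR r) (Bs X'))"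
    by (rule fin_cont) (use p(3) out_cont in blast)
  then obtain k where "\<forall>X'. agree k X X' \<longrightarrow> declits n b xs \<subseteq> outF (PhiR r) (Bs X')" by blast
  then have "\<forall>X'. agree k X X' \<longrightarrow> p \<in> Vop r X'" unfolding Vop_def Dec_def using p by blast
  then show "\<exists>k. \<forall>X'. agree k X X' \<longrightarrow> p \<in> Vop r X'" by blast
qed



definition ext :: "bool list \<Rightarrow> (nat \<Rightarrow> bool) \<Rightarrow> bool" where
  "ext p X \<longleftrightarrow> (\<forall>j<length p. X j = p ! j)"

definition pre :: "bool list \<Rightarrow> bool list \<Rightarrow> bool" where
  "pre p q \<longleftrightarrow> (\<exists>r. q = p @ r)"

definition Forced :: "((nat \<Rightarrow> bool) \<Rightarrow> (nat \<times> bool) set) \<Rightarrow> bool list \<Rightarrow> bool list \<Rightarrow> bool" where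
  "Forced V p q \<longleftrightarrow> (\<forall>X Y. ext p X \<longrightarrow> ext q Y \<longrightarrow> V X \<noteq> graph Y)"

lemma pre_refl: "pre p p" unfolding pre_def by (rule exI[of _ "[]"]) simp

lemma pre_trans: "pre p q \<Longrightarrow> pre q r \<Longrightarrow> pre p r" unfolding pre_def by auto

lemma pre_iff: "pre p q \<longleftrightarrow> length p \<le> length q \<and> (\<forall>j<length p. q ! j = p ! j)"
proof
  assume "pre p q" then show "length p \<le> length q \<and> (\<forall>j<length p. q ! j = p ! j)"
    unfolding pre_def by (auto simp: nth_append)
next
  assume a: "length p \<le> length q \<and> (\<forall>j<length p. q ! j = p ! j)"
  have "take (length p) q = p" using a by (intro nth_equalityI) auto
  then have "q = p @ drop (length p) q" by (metis append_take_drop_id)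
  then show "pre p q" unfolding pre_def by blast
qed

lemma pre_nth: "pre p q \<Longrightarrow> j < length p \<Longrightarrow> q ! j = p ! j"
  unfolding pre_iff by auto

lemma ext_pre: "pre p q \<Longrightarrow> ext q X \<Longrightarrow> ext p X"
  unfolding ext_def pre_iff by auto

lemma Forced_mono: "pre p p1 \<Longrightarrow> pre q q1 \<Longrightarrow> Forced V p q \<Longrightarrow> Forced V p1 q1"
  unfolding Forced_def using ext_pre by blast

lemma force_ex:
  assumes c: "cont V"
  shows "\<exists>p' q'. pre p p' \<and> pre q q' \<and> Forced V p' q'"
proof (cases "\<exists>X n b. ext p X \<and> (n, b) \<in> V X \<and> (length q \<le> n \<or> q ! n \<noteq> b)")
  case True
  then obtain X n b where A: "ext p X" "(n, b) \<in> V X" "length q \<le> n \<or> q ! n \<noteq> b" by blast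
  from c A(2) obtain k where k: "\<forall>X'. agree k X X' \<longrightarrow> (n, b) \<in> V X'" unfolding cont_def by blast
  define m where "m = max k (length p)"
  define p' where "p' = map X [0..<m]"
  define q' where "q' = (if n < length q then q else q @ replicate (n - length q) False @ [\<not> b])"
  have pp: "pre p p'" unfolding pre_iff p'_def m_def using A(1) unfolding ext_def by auto
  have qq: "pre q q'" unfolding q'_def pre_def by auto
  have qn: "n < length q' \<and> q' ! n \<noteq> b"
  proof (cases "n < length q")
    case True with A(3) show ?thesis unfolding q'_def by simp
  next
    case False
    then have "q' ! n = (replicate (n - length q) False @ [\<not> b]) ! (n - length q)"
      unfolding q'_def by (simp add: nth_append)
    also have "\<dots> = (\<not> b)" by (simp add: nth_append)
    finally show ?thesis using False unfolding q'_def by simp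
  qed
  have "Forced V p' q'" unfolding Forced_def
  proof (intro allI impI)
    fix X' Y assume e1: "ext p' X'" and e2: "ext q' Y"
    have "agree k X X'" unfolding agree_def
    proof (intro allI impI)
      fix j assume "j < k"
      then have "j < length p'" unfolding p'_def m_def by simp
      with e1 have "X' j = p' ! j" unfolding ext_def by blast
      also have "\<dots> = X j" using \<open>j < length p'\<close> unfolding p'_def by simp
      finally show "X' j = X j" .
    qed
    with k have in1: "(n, b) \<in> V X'" by blast
    have "Y n \<noteq> b" using e2 qn unfolding ext_def by auto
    then have "(n, b) \<notin> graph Y" unfolding graph_def by auto
    with in1 show "V X' \<noteq> graph Y" by blast
  qed
  with pp qq show ?thesis by blast
next
  case False
  have "Forced V p q" unfolding Forced_def
  proof (intro allI impI notI)
    fix X Y assume e: "ext p X" "ext q Y" and eq: "V X = graph Y"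
    have "(length q, Y (length q)) \<in> V X" using eq unfolding graph_def by auto
    with False e(1) show False by blast
  qed
  then show ?thesis using pre_refl by blast
qed

definition force :: "((nat \<Rightarrow> bool) \<Rightarrow> (nat \<times> bool) set) \<Rightarrow> bool list \<Rightarrow> bool list \<Rightarrow> bool list \<times> bool list" where
  "force V p q = (SOME pq. pre p (fst pq) \<and> pre q (snd pq) \<and> Forced V (fst pq) (snd pq))"

lemma force_prop:
  assumes "cont V"
  shows "pre p (fst (force V p q)) \<and> pre q (snd (force V p q)) \<and> Forced V (fst (force V p q)) (snd (force V p q))"
proof -
  from force_ex[OF assms] obtain p' q' where "pre p p' \<and> pre q q' \<and> Forced V p' q'" by blast
  then have "\<exists>pq. pre p (fst pq) \<and> pre q (snd pq) \<and> Forced V (fst pq) (snd pq)" by (intro exI[of _ "(p', q')"]) simp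
  then show ?thesis unfolding force_def by (rule someI_ex)
qed

definition step :: "(nat \<Rightarrow> (nat \<Rightarrow> bool) \<Rightarrow> (nat \<times> bool) set) \<Rightarrow> nat \<times> bool list \<times> bool list
    \<Rightarrow> (bool list \<Rightarrow> bool list) \<Rightarrow> (bool list \<Rightarrow> bool list)" where
  "step V r T = (case r of (i, s, t) \<Rightarrow>
      (let pq = force (V i) (T s) (T t) in T(s := fst pq, t := snd pq)))"

lemma step_pre:
  assumes "\<forall>i. cont (V i)" shows "pre (T u) (step V r T u)"
proof -
  obtain i s t where r: "r = (i, s, t)" by (cases r) auto
  let ?pq = "force (V i) (T s) (T t)"
  from force_prop[OF assms[rule_format, of i]] have P: "pre (T s) (fst ?pq)" "pre (T t) (snd ?pq)" by auto
  show ?thesis unfolding step_def r Let_def using P pre_refl by auto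
qed

lemma fold_pre:
  assumes "\<forall>i. cont (V i)" shows "pre (T u) (fold (step V) rs T u)"
proof (induction rs arbitrary: T)
  case Nil then show ?case by (simp add: pre_refl)
next
  case (Cons r rs)
  have "pre (T u) (step V r T u)" using assms by (rule step_pre)
  moreover have "pre (step V r T u) (fold (step V) rs (step V r T) u)" by (rule Cons.IH)
  ultimately show ?case by (simp add: pre_trans[of _ "step V r T u"])
qed

lemma fold_forced:
  assumes c: "\<forall>i. cont (V i)"
  shows "(i, s, t) \<in> set rs \<Longrightarrow> s \<noteq> t \<Longrightarrow> Forced (V i) (fold (step V) rs T s) (fold (step V) rs T t)"
proof (induction rs arbitrary: T)
  case Nil then show ?case by simp
next
  case (Cons r rs)
  show ?case
  proof (cases "r = (i, s, t)")
    case True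
    let ?pq = "force (V i) (T s) (T t)"
    have st: "step V r T s = fst ?pq" "step V r T t = snd ?pq"
      unfolding step_def True Let_def using Cons.prems(2) by auto
    from force_prop[OF c[rule_format, of i]] have "Forced (V i) (fst ?pq) (snd ?pq)" by auto
    then have F: "Forced (V i) (step V r T s) (step V r T t)" using st by simp
    have fp: "pre (step V r T s) (fold (step V) rs (step V r T) s)" using c by (rule fold_pre)
    have fq: "pre (step V r T t) (fold (step V) rs (step V r T) t)" using c by (rule fold_pre)
    have "Forced (V i) (fold (step V) rs (step V r T) s) (fold (step V) rs (step V r T) t)"
      by (rule Forced_mono[OF fp fq F])
    then show ?thesis by simp
  next
    case False
    with Cons.prems have "(i, s, t) \<in> set rs" by simp
    from Cons.IH[OF this Cons.prems(2)] show ?thesis by simp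
  qed
qed

definition Lk :: "nat \<Rightarrow> bool list list" where
  "Lk k = List.n_lists (Suc k) [True, False]"

lemma set_Lk: "length s = Suc k \<Longrightarrow> s \<in> set (Lk k)"
proof -
  assume "length s = Suc k"
  moreover have "set s \<subseteq> set [True, False]" by auto
  ultimately show ?thesis unfolding Lk_def set_n_lists by blast
qed

definition reqs :: "nat \<Rightarrow> (nat \<times> bool list \<times> bool list) list" where
  "reqs k = List.product [0..<Suc k] (List.product (Lk k) (Lk k))"

lemma reqs_mem: "i \<le> k \<Longrightarrow> length s = Suc k \<Longrightarrow> length t = Suc k \<Longrightarrow> (i, s, t) \<in> set (reqs k)"
proof -
  assume a: "i \<le> k" "length s = Suc k" "length t = Suc k"
  have mi: "i \<in> set [0..<Suc k]" using a by (simp del: upt_Suc)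
  show ?thesis unfolding reqs_def set_product using mi set_Lk[OF a(2)] set_Lk[OF a(3)] by blast
qed

fun tree :: "(nat \<Rightarrow> (nat \<Rightarrow> bool) \<Rightarrow> (nat \<times> bool) set) \<Rightarrow> nat \<Rightarrow> bool list \<Rightarrow> bool list" where
  "tree V 0 = (\<lambda>_. [])"
| "tree V (Suc k) = fold (step V) (reqs k) (\<lambda>s. tree V k (butlast s) @ [last s])"

lemma tree_pre:
  assumes "\<forall>i. cont (V i)" shows "pre (tree V k (butlast s)) (tree V (Suc k) s)"
proof -
  have "pre (tree V k (butlast s)) (tree V k (butlast s) @ [last s])" unfolding pre_def by blast
  moreover have "pre ((\<lambda>s. tree V k (butlast s) @ [last s]) s) (tree V (Suc k) s)"
    using fold_pre[OF assms] by simp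
  ultimately show ?thesis by (auto intro: pre_trans)
qed

lemma tree_len:
  assumes "\<forall>i. cont (V i)" shows "k \<le> length (tree V k s)"
proof (induction k arbitrary: s)
  case 0 then show ?case by simp
next
  case (Suc k)
  have "pre (tree V k (butlast s) @ [last s]) (tree V (Suc k) s)"
    using fold_pre[OF assms, of "\<lambda>s. tree V k (butlast s) @ [last s]" s "reqs k"] by simp
  then have "length (tree V k (butlast s) @ [last s]) \<le> length (tree V (Suc k) s)" unfolding pre_iff by simp
  with Suc.IH[of "butlast s"] show ?case by simp
qed

definition pref :: "(nat \<Rightarrow> bool) \<Rightarrow> nat \<Rightarrow> bool list" where
  "pref f m = map f [0..<m]"

lemma butlast_pref: "butlast (pref f (Suc k)) = pref f k"
  unfolding pref_def by simp

lemma tree_chain: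
  assumes c: "\<forall>i. cont (V i)" and "k \<le> m"
  shows "pre (tree V k (pref f k)) (tree V m (pref f m))"
  using assms(2)
proof (induction m rule: dec_induct)
  case base then show ?case by (rule pre_refl)
next
  case (step m)
  have "pre (tree V m (butlast (pref f (Suc m)))) (tree V (Suc m) (pref f (Suc m)))"
    using c by (rule tree_pre)
  then show ?case using step.IH butlast_pref by (metis pre_trans)
qed

definition emb :: "(nat \<Rightarrow> (nat \<Rightarrow> bool) \<Rightarrow> (nat \<times> bool) set) \<Rightarrow> (nat \<Rightarrow> bool) \<Rightarrow> nat \<Rightarrow> bool" where
  "emb V f n = tree V (Suc n) (pref f (Suc n)) ! n"

lemma emb_ext:
  assumes c: "\<forall>i. cont (V i)" shows "ext (tree V k (pref f k)) (emb V f)"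
  unfolding ext_def
proof (intro allI impI)
  fix j assume j: "j < length (tree V k (pref f k))"
  let ?m = "max k (Suc j)"
  have p1: "pre (tree V k (pref f k)) (tree V ?m (pref f ?m))" using c by (rule tree_chain) simp
  have p2: "pre (tree V (Suc j) (pref f (Suc j))) (tree V ?m (pref f ?m))" using c by (rule tree_chain) simp
  have jl: "j < length (tree V (Suc j) (pref f (Suc j)))" using tree_len[OF c, of "Suc j" "pref f (Suc j)"] by simp
  have "emb V f j = tree V ?m (pref f ?m) ! j" unfolding emb_def using pre_nth[OF p2 jl] by simp
  also have "\<dots> = tree V k (pref f k) ! j" using pre_nth[OF p1 j] .
  finally show "emb V f j = tree V k (pref f k) ! j" .
qed

lemma emb_sep:
  assumes c: "\<forall>i. cont (V i)" and fg: "f \<noteq> g"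
  shows "V i (emb V f) \<noteq> graph (emb V g)"
proof -
  from fg obtain n where n: "f n \<noteq> g n" by auto
  let ?k = "max n i"
  have "pref f (Suc ?k) \<noteq> pref g (Suc ?k)"
  proof
    assume "pref f (Suc ?k) = pref g (Suc ?k)"
    then have "pref f (Suc ?k) ! n = pref g (Suc ?k) ! n" by simp
    then have "f n = g n" unfolding pref_def by (simp del: upt_Suc add: less_Suc_eq_le)
    with n show False by simp
  qed
  then have "(i, pref f (Suc ?k), pref g (Suc ?k)) \<in> set (reqs ?k)"
    by (intro reqs_mem) (auto simp: pref_def)
  from fold_forced[OF c this \<open>pref f (Suc ?k) \<noteq> pref g (Suc ?k)\<close>]
  have "Forced (V i) (tree V (Suc ?k) (pref f (Suc ?k))) (tree V (Suc ?k) (pref g (Suc ?k)))" by simp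
  moreover have "ext (tree V (Suc ?k) (pref f (Suc ?k))) (emb V f)" using c by (rule emb_ext)
  moreover have "ext (tree V (Suc ?k) (pref g (Suc ?k))) (emb V g)" using c by (rule emb_ext)
  ultimately show ?thesis unfolding Forced_def by blast
qed



definition VV :: "nat \<Rightarrow> (nat \<Rightarrow> bool) \<Rightarrow> (nat \<times> bool) set" where
  "VV i = Vop (from_nat i)"

lemma VV_cont: "\<forall>i. cont (VV i)"
  unfolding VV_def using Vop_cont by blast

lemma no_le:
  assumes fg: "f \<noteq> g"
  shows "\<not> le_c sigB (KK (emb VV f)) sigB (KK (emb VV g))"
proof
  assume "le_c sigB (KK (emb VV f)) sigB (KK (emb VV g))"
  then obtain \<Phi> where ct: "comp_transf sigB (KK (emb VV f)) sigB (KK (emb VV g)) \<Phi>"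
    unfolding le_c_def comp_emb_def by blast
  from Phi_is_PhiR[OF ct] obtain r where r: "\<Phi> = PhiR r" by blast
  from ct have fin: "\<forall>p\<in>\<Phi>. finite (fst p)" unfolding comp_transf_def by auto
  from ct have "\<forall>A\<in>KK (emb VV f). \<exists>B\<in>KK (emb VV g). transf_out sigB \<Phi> A = diag sigB B"
    unfolding comp_transf_def by blast
  with Bs_in obtain B where B: "B \<in> KK (emb VV g)" "transf_out sigB \<Phi> (Bs (emb VV f)) = diag sigB B"
    by blast
  have "Vop r (emb VV f) = Dec (diag sigB B)"
    unfolding Vop_def using B(2) out_eq[OF fin] r by simp
  also have "\<dots> = graph (emb VV g)" using B(1) unfolding KK_def by (simp add: Dec_graph)
  finally have "VV (to_nat r) (emb VV f) = graph (emb VV g)" unfolding VV_def by simp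
  with emb_sep[OF VV_cont fg] show False by blast
qed

theorem proposition4p1:
  shows "\<exists>(sig :: (nat \<Rightarrow> bool) \<Rightarrow> nat list) (K :: (nat \<Rightarrow> bool) \<Rightarrow> struc set).
           (\<forall>f. is_class (sig f) (K f) \<and> le_c (sig f) (K f) PF_sig PF) \<and>
           (\<forall>f g. f \<noteq> g \<longrightarrow> incomparable (sig f) (K f) (sig g) (K g))"
proof (intro exI conjI allI impI)
  fix f show "is_class ((\<lambda>_. sigB) f) ((\<lambda>f. KK (emb VV f)) f)" by (simp add: KK_class)
  fix f show "le_c ((\<lambda>_. sigB) f) ((\<lambda>f. KK (emb VV f)) f) PF_sig PF" by (simp add: KK_le_PF)
next
  fix f g :: "nat \<Rightarrow> bool" assume "f \<noteq> g"
  then show "incomparable ((\<lambda>_. sigB) f) ((\<lambda>f. KK (emb VV f)) f) ((\<lambda>_. sigB) g) ((\<lambda>f. KK (emb VV f)) g)"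
    unfolding incomparable_def using no_le[of f g] no_le[of g f] by simp
qed


end
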